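(* Let $G=(V,E)$ be a graph, $\prec$ a strict partial order on $P_f(\mathbb{N}^+)$, and $\sigma$ an ordering of $V$. Then there exists an ordering $\tau$ of $V$ with $\sigma=\mathrm{TBLS}(G,\prec,\tau)$ if and only if $\sigma=\mathrm{TBLS}(G,\prec,\sigma)$.
   Context: Let $G=(V,E)$ be a finite undirected graph with $n$ vertices. An ordering of $V$ is a bijection $\sigma:\{1,\dots,n\}\to V$; $\sigma(i)$ is the $i$th vertex. $P_f(\mathbb{N}^+)$ is the set of finite subsets of the positive integers. Given a strict partial order $\prec$ on $P_f(\mathbb{N}^+)$ and an ordering $\tau$ of $V$, the Tie-Breaking Label Search $\mathrm{TBLS}(G,\prec,\tau)$ is the procedure: set $label(v)=\emptyset$ for every $v$; for $i=1,\dots,n$: let Eligible be the set of unnumbered vertices $x$ such that there is no unnumbered vertex $y$ with $label(x)\prec label(y)$; let $v$ be the first vertex of Eligible in the ordering $\tau$; set $\sigma(i)=v$ ($v$ becomes numbered); for every unnumbered neighbour $w$ of $v$ replace $label(w)$ by $label(w)\cup\{i\}$. The output is $\sigma$. *)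

theory Defs
  imports Main
begin

definition graph :: "'a set \<Rightarrow> ('a \<Rightarrow> 'a \<Rightarrow> bool) \<Rightarrow> bool" where
  "graph V E \<longleftrightarrow> finite V \<and> (\<forall>x y. E x y \<longrightarrow> x \<in> V \<and> y \<in> V)
      \<and> (\<forall>x y. E x y \<longrightarrow> E y x) \<and> (\<forall>x. \<not> E x x)"

definition ordering_of :: "'a set \<Rightarrow> (nat \<Rightarrow> 'a) \<Rightarrow> bool" where
  "ordering_of V \<sigma> \<longleftrightarrow> bij_betw \<sigma> {1..card V} V"

definition Pf_pos :: "nat set set" where
  "Pf_pos = {S. finite S \<and> 0 \<notin> S}"

definition strict_po_on :: "'b set \<Rightarrow> ('b \<Rightarrow> 'b \<Rightarrow> bool) \<Rightarrow> bool" where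
  "strict_po_on A r \<longleftrightarrow> (\<forall>x\<in>A. \<not> r x x)
      \<and> (\<forall>x\<in>A. \<forall>y\<in>A. \<forall>z\<in>A. r x y \<longrightarrow> r y z \<longrightarrow> r x z)"

text \<open>Run of TBLS: the list of numbered vertices after some steps, in order
(element k of the list is sigma(k+1)).\<close>
definition tbls_label :: "('a \<Rightarrow> 'a \<Rightarrow> bool) \<Rightarrow> 'a list \<Rightarrow> 'a \<Rightarrow> nat set" where
  "tbls_label E vs w = {i. 1 \<le> i \<and> i \<le> length vs \<and> E (vs ! (i - 1)) w}"

definition tbls_eligible ::
  "'a set \<Rightarrow> ('a \<Rightarrow> 'a \<Rightarrow> bool) \<Rightarrow> (nat set \<Rightarrow> nat set \<Rightarrow> bool) \<Rightarrow> 'a list \<Rightarrow> 'a set" where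
  "tbls_eligible V E prec vs =
     {x \<in> V - set vs. \<not> (\<exists>y \<in> V - set vs. prec (tbls_label E vs x) (tbls_label E vs y))}"

definition first_in :: "'a set \<Rightarrow> (nat \<Rightarrow> 'a) \<Rightarrow> 'a set \<Rightarrow> 'a" where
  "first_in V \<tau> S = \<tau> (LEAST k. k \<in> {1..card V} \<and> \<tau> k \<in> S)"

fun tbls_run ::
  "'a set \<Rightarrow> ('a \<Rightarrow> 'a \<Rightarrow> bool) \<Rightarrow> (nat set \<Rightarrow> nat set \<Rightarrow> bool) \<Rightarrow> (nat \<Rightarrow> 'a) \<Rightarrow> nat \<Rightarrow> 'a list" where
  "tbls_run V E prec \<tau> 0 = []"
| "tbls_run V E prec \<tau> (Suc i) =
     (let vs = tbls_run V E prec \<tau> i in vs @ [first_in V \<tau> (tbls_eligible V E prec vs)])"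

definition TBLS ::
  "'a set \<Rightarrow> ('a \<Rightarrow> 'a \<Rightarrow> bool) \<Rightarrow> (nat set \<Rightarrow> nat set \<Rightarrow> bool) \<Rightarrow> (nat \<Rightarrow> 'a) \<Rightarrow> nat \<Rightarrow> 'a" where
  "TBLS V E prec \<tau> i = tbls_run V E prec \<tau> (card V) ! (i - 1)"

end

theory Submission
  imports Defs
begin

lemma maximal_exists:
  assumes "finite A" "A \<noteq> {}" "A \<subseteq> P" "strict_po_on P r"
  shows "\<exists>x\<in>A. \<forall>y\<in>A. \<not> r x y"
  using assms
proof (induction A rule: finite_ne_induct)
  case (singleton x)
  then show ?case by (auto simp: strict_po_on_def)
next
  case (insert x F)
  then obtain m where m: "m \<in> F" "\<forall>y\<in>F. \<not> r m y" by auto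
  show ?case
  proof (cases "r m x")
    case True
    have "\<forall>y\<in>insert x F. \<not> r x y"
    proof
      fix y assume y: "y \<in> insert x F"
      show "\<not> r x y"
      proof
        assume rxy: "r x y"
        show False
        proof (cases "y = x")
          case True then show False using rxy insert.prems by (auto simp: strict_po_on_def)
        next
          case False
          then have "y \<in> F" using y by auto
          then have "r m y" using True rxy insert.prems m(1)
            unfolding strict_po_on_def by blast
          then show False using m \<open>y \<in> F\<close> by auto
        qed
      qed
    qed
    then show ?thesis by auto
  next
    case False
    then show ?thesis using m by auto
  qed
qed

lemma run_length[simp]: "length (tbls_run V E prec \<tau> k) = k"
  by (induction k) (auto simp: Let_def)

lemma run_take: "k \<le> m \<Longrightarrow> tbls_run V E prec \<tau> k = take k (tbls_run V E prec \<tau> m)"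
proof (induction m)
  case 0 then show ?case by simp
next
  case (Suc m)
  show ?case
  proof (cases "k = Suc m")
    case True then show ?thesis by (simp add: Let_def)
  next
    case False
    then have "k \<le> m" using Suc.prems by simp
    then show ?thesis using Suc.IH by (simp add: Let_def)
  qed
qed

lemma first_in_mem:
  assumes "ordering_of V \<tau>" "S \<subseteq> V" "S \<noteq> {}"
  shows "first_in V \<tau> S \<in> S"
proof -
  obtain s where s: "s \<in> S" using assms by auto
  then have "s \<in> V" using assms by auto
  moreover have "\<tau> ` {1..card V} = V"
    using assms(1) unfolding ordering_of_def bij_betw_def by simp
  ultimately have "s \<in> \<tau> ` {1..card V}" by simp
  then obtain j where j: "j \<in> {1..card V}" "\<tau> j = s"
    by auto
  then have "\<exists>k. k \<in> {1..card V} \<and> \<tau> k \<in> S" using s by auto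
  from LeastI_ex[OF this] show ?thesis unfolding first_in_def by blast
qed

lemma elig_sub: "tbls_eligible V E prec vs \<subseteq> V"
  unfolding tbls_eligible_def by auto

lemma elig_ne:
  assumes "finite V" "V - set vs \<noteq> {}" "strict_po_on Pf_pos prec"
  shows "tbls_eligible V E prec vs \<noteq> {}"
proof -
  let ?A = "tbls_label E vs ` (V - set vs)"
  have "?A \<subseteq> Pf_pos"
    unfolding Pf_pos_def tbls_label_def
    by (auto intro: finite_subset[of _ "{1..length vs}"])
  moreover have "finite ?A" "?A \<noteq> {}" using assms by auto
  ultimately obtain a where a: "a \<in> ?A" "\<forall>b\<in>?A. \<not> prec a b"
    using maximal_exists[OF _ _ _ assms(3)] by meson
  then obtain x where "x \<in> V - set vs" "a = tbls_label E vs x" by auto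
  then have "x \<in> tbls_eligible V E prec vs"
    using a unfolding tbls_eligible_def by auto
  then show ?thesis by auto
qed

theorem theorem2:
  fixes V :: "'a set" and E :: "'a \<Rightarrow> 'a \<Rightarrow> bool"
    and prec :: "nat set \<Rightarrow> nat set \<Rightarrow> bool" and \<sigma> :: "nat \<Rightarrow> 'a"
  assumes "graph V E"
    and "strict_po_on Pf_pos prec"
    and "ordering_of V \<sigma>"
  shows "(\<exists>\<tau>. ordering_of V \<tau> \<and> (\<forall>i\<in>{1..card V}. \<sigma> i = TBLS V E prec \<tau> i))
     \<longleftrightarrow> (\<forall>i\<in>{1..card V}. \<sigma> i = TBLS V E prec \<sigma> i)"
proof
  assume "\<forall>i\<in>{1..card V}. \<sigma> i = TBLS V E prec \<sigma> i"
  then show "\<exists>\<tau>. ordering_of V \<tau> \<and> (\<forall>i\<in>{1..card V}. \<sigma> i = TBLS V E prec \<tau> i)"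
    using assms(3) by blast
next
  assume "\<exists>\<tau>. ordering_of V \<tau> \<and> (\<forall>i\<in>{1..card V}. \<sigma> i = TBLS V E prec \<tau> i)"
  then obtain \<tau> where tau: "ordering_of V \<tau>" and eq: "\<forall>i\<in>{1..card V}. \<sigma> i = TBLS V E prec \<tau> i"
    by blast
  let ?n = "card V"
  have finV: "finite V" using assms(1) unfolding graph_def by auto
  have bs: "bij_betw \<sigma> {1..?n} V" using assms(3) unfolding ordering_of_def .
  have runtau: "tbls_run V E prec \<tau> k = map \<sigma> [1..<k+1]" if "k \<le> ?n" for k
  proof -
    have "tbls_run V E prec \<tau> k = take k (tbls_run V E prec \<tau> ?n)"
      using run_take that by blast
    also have "\<dots> = map \<sigma> [1..<k+1]"
    proof (rule nth_equalityI)
      fix j assume "j < length (take k (tbls_run V E prec \<tau> ?n))"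
      then have j: "j < k" using that by simp
      have "map \<sigma> [1..<k+1] ! j = \<sigma> (1+j)" by (rule nth_map_upt) (use j in simp)
      have "\<sigma> (j+1) = TBLS V E prec \<tau> (j+1)" using eq that j by auto
      then show "take k (tbls_run V E prec \<tau> ?n) ! j = map \<sigma> [1..<k+1] ! j"
        using j that \<open>map \<sigma> [1..<k+1] ! j = \<sigma> (1+j)\<close> by (simp add: TBLS_def del: upt_Suc)
    qed (use that in simp)
    finally show ?thesis .
  qed
  have setmap: "set (map \<sigma> [1..<k+1]) = \<sigma> ` {1..k}" for k
    by auto
  have runsig: "tbls_run V E prec \<sigma> k = map \<sigma> [1..<k+1]" if "k \<le> ?n" for k
    using that
  proof (induction k)
    case 0 then show ?case by simp
  next
    case (Suc k)
    let ?vs = "map \<sigma> [1..<k+1]"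
    let ?El = "tbls_eligible V E prec ?vs"
    have IH: "tbls_run V E prec \<sigma> k = ?vs" using Suc by simp
    have sub: "\<sigma> ` {1..k} \<subseteq> V" using bs Suc.prems unfolding bij_betw_def by auto
    have cardk: "card (\<sigma> ` {1..k}) = k"
    proof -
      have "inj_on \<sigma> {1..k}" using bs Suc.prems unfolding bij_betw_def
        by (auto intro: inj_on_subset)
      then show ?thesis by (simp add: card_image)
    qed
    have "V - set ?vs \<noteq> {}"
    proof
      assume "V - set ?vs = {}"
      then have "V \<subseteq> \<sigma> ` {1..k}" using setmap by auto
      then have "card V \<le> card (\<sigma> ` {1..k})" by (intro card_mono) auto
      then have "card V \<le> k" using cardk by simp
      then show False using Suc.prems by simp
    qed
    then have ne: "?El \<noteq> {}" by (rule elig_ne[OF finV _ assms(2)])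
    have "tbls_run V E prec \<tau> (Suc k) = ?vs @ [first_in V \<tau> ?El]"
      using runtau[of k] Suc.prems by (simp add: Let_def)
    moreover have "tbls_run V E prec \<tau> (Suc k) = ?vs @ [\<sigma> (Suc k)]"
      using runtau[OF Suc.prems] by simp
    ultimately have fe: "first_in V \<tau> ?El = \<sigma> (Suc k)" by simp
    have mem: "\<sigma> (Suc k) \<in> ?El" using first_in_mem[OF tau elig_sub ne] fe by simp
    have "(LEAST j. j \<in> {1..?n} \<and> \<sigma> j \<in> ?El) = Suc k"
    proof (rule Least_equality)
      show "Suc k \<in> {1..?n} \<and> \<sigma> (Suc k) \<in> ?El" using mem Suc.prems by simp
    next
      fix y assume y: "y \<in> {1..?n} \<and> \<sigma> y \<in> ?El"
      then have "\<sigma> y \<notin> \<sigma> ` {1..k}" unfolding tbls_eligible_def using setmap by auto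
      then have "y \<notin> {1..k}" by auto
      then show "Suc k \<le> y" using y by auto
    qed
    then have "first_in V \<sigma> ?El = \<sigma> (Suc k)" unfolding first_in_def by simp
    then show ?case using IH by (simp add: Let_def)
  qed
  show "\<forall>i\<in>{1..card V}. \<sigma> i = TBLS V E prec \<sigma> i"
  proof
    fix i assume i: "i \<in> {1..card V}"
    have "map \<sigma> [1..<?n+1] ! (i-1) = \<sigma> (1+(i-1))" by (rule nth_map_upt) (use i in auto)
    then show "\<sigma> i = TBLS V E prec \<sigma> i"
      using runsig[of ?n] i by (simp add: TBLS_def del: upt_Suc)
  qed
qed

end
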